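(* Let $R=\bigoplus_{s\in S}R_s$ be an $S$-graded ring inducing $S$ with $S$ cancellative. If $R$ is graded von Neumann regular, then $R$ is nearly epsilon-strongly graded.
   Context: Rings are associative, not necessarily unital. $S$-graded ring inducing $S$: $S$ a partial groupoid, $R=\bigoplus_{s\in S}R_s$, $R_sR_t\subseteq R_{st}$ when $st$ is defined, and $R_sR_t\neq0$ implies $st$ defined. Convention: $0\in S$, $R_0=0$, $S\setminus\{0\}=\{s:R_s\ne0\}$, undefined products set to $0$, $0$ absorbing. $H_R=\bigcup_sR_s$. $S$ is cancellative if $0\ne su=tu$ or $0\ne us=ut$ implies $s=t$. $I(S)$ is the set of idempotents of $S$. $S$ satisfies (LRI) if for every $s\in S$ there exist $s^{-1}\in S$ and $e,f\in I(S)$ with $es=sf=s$, $fs^{-1}=s^{-1}e=s^{-1}$, $ss^{-1}=e$, $s^{-1}s=f$ (these are unique when $S$ is cancellative). For $s,t$, $R_sR_t$ denotes the additive subgroup generated by products $ab$, $a\in R_s$, $b\in R_t$. $R$ (with $S$ cancellative) is nearly epsilon-strongly graded if $S$ satisfies (LRI) and for every $s\in S$ and $x\in R_s$ there exist $\epsilon(x)\in R_sR_{s^{-1}}$ and $\epsilon'(x)\in R_{s^{-1}}R_s$ with $\epsilon(x)x=x=x\epsilon'(x)$. $R$ is graded von Neumann regular if $x\in xRx$ for all $x\in H_R$. *)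

theory Defs
  imports Main
begin

text \<open>A partial groupoid S with an absorbing zero z is modelled as a type 's with a total
binary operation m, undefined products being sent to z. The ring R is the whole type 'a
(an associative, not necessarily unital ring, class ring).\<close>

definition graded_ring_inducing ::
  "('s \<Rightarrow> 's \<Rightarrow> 's) \<Rightarrow> 's \<Rightarrow> ('s \<Rightarrow> 'a::ring set) \<Rightarrow> bool" where
  "graded_ring_inducing m z G \<longleftrightarrow>
     (\<forall>t. m z t = z \<and> m t z = z) \<and>
     G z = {0} \<and>
     (\<forall>s. s \<noteq> z \<longrightarrow> G s \<noteq> {0}) \<and>
     (\<forall>s. 0 \<in> G s \<and> (\<forall>x\<in>G s. \<forall>y\<in>G s. x + y \<in> G s \<and> - x \<in> G s)) \<and>
     (\<forall>x. \<exists>c. finite {s. c s \<noteq> 0} \<and> (\<forall>s. c s \<in> G s) \<and>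
            x = (\<Sum>s\<in>{s. c s \<noteq> 0}. c s)) \<and>
     (\<forall>c. finite {s. c s \<noteq> 0} \<and> (\<forall>s. c s \<in> G s) \<and>
            (\<Sum>s\<in>{s. c s \<noteq> 0}. c s) = 0 \<longrightarrow> (\<forall>s. c s = 0)) \<and>
     (\<forall>s t. \<forall>a\<in>G s. \<forall>b\<in>G t. a * b \<in> G (m s t))"

definition cancellative :: "('s \<Rightarrow> 's \<Rightarrow> 's) \<Rightarrow> 's \<Rightarrow> bool" where
  "cancellative m z \<longleftrightarrow>
     (\<forall>s t u. (m s u \<noteq> z \<and> m s u = m t u) \<longrightarrow> s = t) \<and>
     (\<forall>s t u. (m u s \<noteq> z \<and> m u s = m u t) \<longrightarrow> s = t)"

definition idempotents :: "('s \<Rightarrow> 's \<Rightarrow> 's) \<Rightarrow> 's set" where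
  "idempotents m = {e. m e e = e}"

definition LRI_inverse :: "('s \<Rightarrow> 's \<Rightarrow> 's) \<Rightarrow> 's \<Rightarrow> 's \<Rightarrow> bool" where
  "LRI_inverse m s s' \<longleftrightarrow>
     (\<exists>e\<in>idempotents m. \<exists>f\<in>idempotents m.
        m e s = s \<and> m s f = s \<and> m f s' = s' \<and> m s' e = s' \<and> m s s' = e \<and> m s' s = f)"

definition LRI :: "('s \<Rightarrow> 's \<Rightarrow> 's) \<Rightarrow> bool" where
  "LRI m \<longleftrightarrow> (\<forall>s. \<exists>s'. LRI_inverse m s s')"

inductive_set prod_subgroup :: "'a::ring set \<Rightarrow> 'a set \<Rightarrow> 'a set" for A B where
  zero: "0 \<in> prod_subgroup A B"
| gen: "a \<in> A \<Longrightarrow> b \<in> B \<Longrightarrow> a * b \<in> prod_subgroup A B"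
| add: "x \<in> prod_subgroup A B \<Longrightarrow> y \<in> prod_subgroup A B \<Longrightarrow> x + y \<in> prod_subgroup A B"
| neg: "x \<in> prod_subgroup A B \<Longrightarrow> - x \<in> prod_subgroup A B"

text \<open>Since S is cancellative, the inverse s^{-1} in (LRI) is unique; we quantify over it.\<close>
definition nearly_epsilon_strongly_graded ::
  "('s \<Rightarrow> 's \<Rightarrow> 's) \<Rightarrow> ('s \<Rightarrow> 'a::ring set) \<Rightarrow> bool" where
  "nearly_epsilon_strongly_graded m G \<longleftrightarrow>
     LRI m \<and>
     (\<forall>s s'. LRI_inverse m s s' \<longrightarrow>
        (\<forall>x\<in>G s. \<exists>\<epsilon>\<in>prod_subgroup (G s) (G s'). \<exists>\<epsilon>'\<in>prod_subgroup (G s') (G s).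
            \<epsilon> * x = x \<and> x * \<epsilon>' = x))"

definition homogeneous :: "('s \<Rightarrow> 'a set) \<Rightarrow> 'a set" where
  "homogeneous G = (\<Union>s. G s)"

definition graded_von_neumann_regular :: "('s \<Rightarrow> 'a::ring set) \<Rightarrow> bool" where
  "graded_von_neumann_regular G \<longleftrightarrow> (\<forall>x\<in>homogeneous G. \<exists>r. x = x * r * x)"

end

theory Submission
  imports Defs
begin

lemma gr_facts:
  assumes "graded_ring_inducing m z G"
  shows "\<And>t. m z t = z" "\<And>t. m t z = z" "G z = {0}" "\<And>s. s \<noteq> z \<Longrightarrow> G s \<noteq> {0}"
    "\<And>s. 0 \<in> G s" "\<And>s x y. x \<in> G s \<Longrightarrow> y \<in> G s \<Longrightarrow> x + y \<in> G s"
    "\<And>s x. x \<in> G s \<Longrightarrow> - x \<in> G s"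
    "\<And>x. \<exists>c. finite {s. c s \<noteq> 0} \<and> (\<forall>s. c s \<in> G s) \<and> x = (\<Sum>s\<in>{s. c s \<noteq> 0}. c s)"
    "\<And>c. finite {s. c s \<noteq> 0} \<Longrightarrow> (\<forall>s. c s \<in> G s) \<Longrightarrow> (\<Sum>s\<in>{s. c s \<noteq> 0}. c s) = 0 \<Longrightarrow> c s = 0"
    "\<And>s t a b. a \<in> G s \<Longrightarrow> b \<in> G t \<Longrightarrow> a * b \<in> G (m s t)"
proof -
  note D = assms[unfolded graded_ring_inducing_def]
  note D = D[THEN conjunct1] D[THEN conjunct2, THEN conjunct1]
    D[THEN conjunct2, THEN conjunct2, THEN conjunct1]
    D[THEN conjunct2, THEN conjunct2, THEN conjunct2, THEN conjunct1]
    D[THEN conjunct2, THEN conjunct2, THEN conjunct2, THEN conjunct2, THEN conjunct1]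
    D[THEN conjunct2, THEN conjunct2, THEN conjunct2, THEN conjunct2, THEN conjunct2, THEN conjunct1]
    D[THEN conjunct2, THEN conjunct2, THEN conjunct2, THEN conjunct2, THEN conjunct2, THEN conjunct2]
  show "\<And>t. m z t = z" "\<And>t. m t z = z" using D(1) by auto
  show "G z = {0}" by (rule D(2))
  show "\<And>s. s \<noteq> z \<Longrightarrow> G s \<noteq> {0}" using D(3) by blast
  show "\<And>s. 0 \<in> G s" "\<And>s x y. x \<in> G s \<Longrightarrow> y \<in> G s \<Longrightarrow> x + y \<in> G s"
    "\<And>s x. x \<in> G s \<Longrightarrow> - x \<in> G s" using D(4) by blast+
  show "\<And>x. \<exists>c. finite {s. c s \<noteq> 0} \<and> (\<forall>s. c s \<in> G s) \<and> x = (\<Sum>s\<in>{s. c s \<noteq> 0}. c s)"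
    using D(5) by blast
  show "\<And>c. finite {s. c s \<noteq> 0} \<Longrightarrow> (\<forall>s. c s \<in> G s) \<Longrightarrow> (\<Sum>s\<in>{s. c s \<noteq> 0}. c s) = 0 \<Longrightarrow> c s = 0"
    using D(6) by blast
  show "\<And>s t a b. a \<in> G s \<Longrightarrow> b \<in> G t \<Longrightarrow> a * b \<in> G (m s t)" using D(7) by blast
qed

lemma gsum:
  assumes "graded_ring_inducing m z G" "finite F" "\<forall>t\<in>F. d t \<in> G p"
  shows "sum d F \<in> G p"
  using assms(2,3)
proof (induction F rule: finite_induct)
  case empty then show ?case using gr_facts(5)[OF assms(1)] by simp
next
  case (insert x F)
  have a: "d x \<in> G p" using insert.prems by simp
  have b: "sum d F \<in> G p" using insert.IH insert.prems by simp
  show ?case using gr_facts(6)[OF assms(1) a b] insert.hyps by simp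
qed

lemma gdiff:
  assumes "graded_ring_inducing m z G" "x \<in> G s" "y \<in> G s"
  shows "x - y \<in> G s"
  using gr_facts(6)[OF assms(1) assms(2) gr_facts(7)[OF assms(1) assms(3)]] by (simp only: diff_conv_add_uminus)

lemma disj:
  assumes g: "graded_ring_inducing m z G" and "a \<in> G p" "a \<in> G q" "a \<noteq> 0"
  shows "p = q"
proof (rule ccontr)
  assume pq: "p \<noteq> q"
  define c where "c = (\<lambda>u. if u = p then a else if u = q then - a else 0)"
  have sup: "{u. c u \<noteq> 0} = {p, q}" using pq assms(4) unfolding c_def by auto
  have "\<forall>u. c u \<in> G u" using gr_facts(5,7)[OF g] assms(2,3) unfolding c_def by auto
  moreover have "(\<Sum>u\<in>{u. c u \<noteq> 0}. c u) = 0" unfolding sup using pq by (simp add: c_def)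
  ultimately have "c p = 0" using gr_facts(9)[OF g, of c p] sup by simp
  then show False using assms(4) by (simp add: c_def)
qed

lemma disj2:
  assumes g: "graded_ring_inducing m z G" and "a \<in> G p" "a' \<in> G q" "a = a'" "a' \<noteq> 0"
  shows "p = q"
  using disj[OF g] assms(2-5) by blast

lemma indep:
  assumes g: "graded_ring_inducing m z G" and F: "finite F" and y: "y \<in> G s"
    and d: "\<forall>t\<in>F. d t \<in> G (\<phi> t) \<and> \<phi> t \<noteq> s" and ys: "y = sum d F"
  shows "y = 0"
proof -
  define c where "c = (\<lambda>p. if p = s then - y else (\<Sum>t\<in>{t\<in>F. \<phi> t = p}. d t))"
  define S0 where "S0 = insert s (\<phi> ` F)"
  have fS0: "finite S0" using F by (simp add: S0_def)
  have sub: "{p. c p \<noteq> 0} \<subseteq> S0"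
  proof
    fix p assume "p \<in> {p. c p \<noteq> 0}"
    then have "c p \<noteq> 0" by simp
    show "p \<in> S0"
    proof (rule ccontr)
      assume "p \<notin> S0"
      then have "p \<noteq> s" "{t\<in>F. \<phi> t = p} = {}" by (auto simp: S0_def)
      then show False using \<open>c p \<noteq> 0\<close> unfolding c_def by (metis sum.empty)
    qed
  qed
  have fin: "finite {p. c p \<noteq> 0}" using finite_subset[OF sub fS0] .
  have inG: "\<forall>p. c p \<in> G p"
  proof
    fix p show "c p \<in> G p"
    proof (cases "p = s")
      case True then show ?thesis using gr_facts(7)[OF g] y by (simp add: c_def)
    next
      case False
      have "(\<Sum>t\<in>{t\<in>F. \<phi> t = p}. d t) \<in> G p"
        by (rule gsum[OF g]) (use F d in auto)
      then show ?thesis using False by (simp add: c_def)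
    qed
  qed
  have "(\<Sum>p\<in>{p. c p \<noteq> 0}. c p) = (\<Sum>p\<in>S0. c p)"
    by (rule sum.mono_neutral_left[OF fS0 sub]) auto
  also have "\<dots> = c s + (\<Sum>p\<in>\<phi> ` F. c p)"
    unfolding S0_def using F d by (subst sum.insert) auto
  also have "(\<Sum>p\<in>\<phi> ` F. c p) = (\<Sum>p\<in>\<phi> ` F. (\<Sum>t\<in>{t\<in>F. \<phi> t = p}. d t))"
    by (rule sum.cong) (use d in \<open>auto simp: c_def\<close>)
  also have "\<dots> = sum d F"
    using sum.image_gen[OF F, of d \<phi>] by simp
  finally have "(\<Sum>p\<in>{p. c p \<noteq> 0}. c p) = 0" using ys by (simp add: c_def)
  then have "c s = 0" using gr_facts(9)[OF g fin inG] by blast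
  then show ?thesis by (simp add: c_def)
qed

lemma decomp:
  assumes g: "graded_ring_inducing m z G" and vn: "graded_von_neumann_regular G" and x: "x \<in> G s"
  shows "\<exists>P c. finite P \<and> (\<forall>t. c t \<in> G t) \<and> (\<forall>t\<in>P. m (m s t) s = s) \<and> x = (\<Sum>t\<in>P. x * c t * x)"
proof -
  have "x \<in> homogeneous G" using x by (auto simp: homogeneous_def)
  then obtain r where r: "x = x * r * x" using vn unfolding graded_von_neumann_regular_def by blast
  obtain c where c: "finite {s. c s \<noteq> 0}" "\<forall>s. c s \<in> G s" "r = (\<Sum>s\<in>{s. c s \<noteq> 0}. c s)"
    using gr_facts(8)[OF g, of r] by blast
  define T where "T = {s. c s \<noteq> 0}"
  define P where "P = {t\<in>T. m (m s t) s = s}"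
  have fT: "finite T" using c(1) T_def by simp
  have fP: "finite P" using fT P_def by simp
  have "x = (\<Sum>t\<in>T. x * c t * x)"
    using r c(3) unfolding T_def by (simp add: sum_distrib_left sum_distrib_right)
  also have "\<dots> = (\<Sum>t\<in>P. x * c t * x) + (\<Sum>t\<in>T - P. x * c t * x)"
    using sum.subset_diff[OF _ fT, of P] P_def by (simp add: add.commute)
  finally have eq: "x = (\<Sum>t\<in>P. x * c t * x) + (\<Sum>t\<in>T - P. x * c t * x)" .
  have deg: "x * c t * x \<in> G (m (m s t) s)" for t
    by (intro gr_facts(10)[OF g] x c(2)[rule_format])
  have Pin: "(\<Sum>t\<in>P. x * c t * x) \<in> G s"
  proof (rule gsum[OF g fP], intro ballI)
    fix t assume "t \<in> P" then show "x * c t * x \<in> G s" using deg[of t] P_def by simp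
  qed
  have "x - (\<Sum>t\<in>P. x * c t * x) = 0"
  proof (rule indep[OF g _ _ _ _])
    show "finite (T - P)" using fT by simp
    show "x - (\<Sum>t\<in>P. x * c t * x) \<in> G s" using gdiff[OF g x Pin] .
    show "\<forall>t\<in>T - P. x * c t * x \<in> G (m (m s t) s) \<and> m (m s t) s \<noteq> s"
      using deg P_def by simp
    show "x - (\<Sum>t\<in>P. x * c t * x) = (\<Sum>t\<in>T - P. x * c t * x)"
      using eq by (simp add: algebra_simps)
  qed
  then have "x = (\<Sum>t\<in>P. x * c t * x)" by simp
  then show ?thesis using fP c(2) P_def by blast
qed

theorem proposition4p7:
  fixes m :: "'s \<Rightarrow> 's \<Rightarrow> 's" and z :: 's and G :: "'s \<Rightarrow> 'a::ring set"
  assumes "graded_ring_inducing m z G"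
    and "cancellative m z"
    and "graded_von_neumann_regular G"
  shows "nearly_epsilon_strongly_graded m G"
proof -
  note g = assms(1) and vn = assms(3)
  note F = gr_facts[OF g]
  have rc: "\<And>s t u. m s u \<noteq> z \<Longrightarrow> m s u = m t u \<Longrightarrow> s = t"
   and lc: "\<And>s t u. m u s \<noteq> z \<Longrightarrow> m u s = m u t \<Longrightarrow> s = t"
    using assms(2) unfolding cancellative_def by blast+
  have LRI: "LRI m"
    unfolding LRI_def
  proof
    fix s
    show "\<exists>s'. LRI_inverse m s s'"
    proof (cases "s = z")
      case True
      then show ?thesis unfolding LRI_inverse_def idempotents_def using F(1) by blast
    next
      case False
      then obtain x where x: "x \<in> G s" "x \<noteq> 0" using F(4,5) by blast
      obtain P c where Pc: "finite P" "\<forall>t. c t \<in> G t" "\<forall>t\<in>P. m (m s t) s = s"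
        "x = (\<Sum>t\<in>P. x * c t * x)" using decomp[OF g vn x(1)] by blast
      have "P \<noteq> {}" using Pc(4) x(2) by auto
      then obtain t where t: "t \<in> P" by blast
      have Pt: "P = {t}"
      proof -
        have "t' = t" if "t' \<in> P" for t'
        proof -
          have a: "m (m s t') s = s" "m (m s t) s = s" using Pc(3) t that by auto
          then have "m s t' = m s t" using rc[of "m s t'" s "m s t"] False by simp
          moreover have "m s t' \<noteq> z" using a(1) False F(1) by force
          ultimately show ?thesis using lc by blast
        qed
        then show ?thesis using t by blast
      qed
      define b where "b = c t"
      have b: "b \<in> G t" using Pc(2) b_def by simp
      have xbx: "x * b * x = x" using Pc(4) Pt b_def by simp
      have xbx': "x * (b * x) = x" using xbx by (simp add: mult.assoc)
      have xbxc: "x * (b * (x * w)) = x * w" for w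
      proof -
        have "x * (b * (x * w)) = x * (b * x) * w" by (simp only: mult.assoc)
        then show ?thesis by (simp only: xbx')
      qed
      define e where "e = m s t"
      define f where "f = m t s"
      define s' where "s' = m f t"
      have xb: "x * b \<in> G e" using F(10) x(1) b e_def by blast
      have bx: "b * x \<in> G f" using F(10) x(1) b f_def by blast
      have xbn: "x * b \<noteq> 0" using xbx x(2) by force
      have bxn: "b * x \<noteq> 0" using xbx' x(2) by force
      have y: "b * x * b \<in> G s'" using F(10) bx b s'_def by blast
      have "x * (b * x * b) * x = x" by (simp add: mult.assoc xbx' xbxc)
      then have yn: "b * x * b \<noteq> 0" using x(2) by force
      have "x * b * (x * b) = x * b" by (simp add: mult.assoc xbx' xbxc)
      from disj2[OF g F(10)[OF xb xb] xb this xbn] have ee: "m e e = e" .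
      have "b * x * (b * x) = b * x" by (simp add: mult.assoc xbx' xbxc)
      from disj2[OF g F(10)[OF bx bx] bx this bxn] have ff: "m f f = f" .
      have es: "m e s = s" using disj2[OF g F(10)[OF xb x(1)] x(1) xbx x(2)] .
      have sf: "m s f = s" using disj2[OF g F(10)[OF x(1) bx] x(1) xbx' x(2)] .
      have "x * (b * x * b) = x * b" by (simp add: mult.assoc xbx' xbxc)
      from disj2[OF g F(10)[OF x(1) y] xb this xbn] have ss': "m s s' = e" .
      have "b * x * b * x = b * x" by (simp add: mult.assoc xbx' xbxc)
      from disj2[OF g F(10)[OF y x(1)] bx this bxn] have s's: "m s' s = f" .
      have "b * x * (b * x * b) = b * x * b" by (simp add: mult.assoc xbx' xbxc)
      from disj2[OF g F(10)[OF bx y] y this yn] have fs': "m f s' = s'" .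
      have "b * x * b * (x * b) = b * x * b" by (simp add: mult.assoc xbx' xbxc)
      from disj2[OF g F(10)[OF y xb] y this yn] have s'e: "m s' e = s'" .
      show ?thesis unfolding LRI_inverse_def idempotents_def
        using ee ff es sf ss' s's fs' s'e by (intro exI[of _ s'] bexI[of _ e] bexI[of _ f]) auto
    qed
  qed
  show ?thesis unfolding nearly_epsilon_strongly_graded_def
  proof (intro conjI LRI allI impI ballI)
    fix s s' x
    assume inv: "LRI_inverse m s s'" and x: "x \<in> G s"
    show "\<exists>\<epsilon>\<in>prod_subgroup (G s) (G s'). \<exists>\<epsilon>'\<in>prod_subgroup (G s') (G s). \<epsilon> * x = x \<and> x * \<epsilon>' = x"
    proof (cases "x = 0")
      case True
      then show ?thesis using prod_subgroup.zero by (metis mult_zero_left mult_zero_right)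
    next
      case False
      have sz: "s \<noteq> z" using False x F(3) by auto
      obtain e where e: "m e s = s" "m s s' = e"
        using inv unfolding LRI_inverse_def by blast
      obtain P c where Pc: "finite P" "\<forall>t. c t \<in> G t" "\<forall>t\<in>P. m (m s t) s = s"
        "x = (\<Sum>t\<in>P. x * c t * x)" using decomp[OF g vn x] by blast
      have Psub: "P \<subseteq> {s'}"
      proof
        fix t assume t: "t \<in> P"
        have a: "m (m s t) s = m (m s s') s" using Pc(3) t e by auto
        have "m (m s t) s \<noteq> z" using Pc(3) t sz by auto
        then have "m s t = m s s'" using rc a by blast
        moreover have "m s s' \<noteq> z" using e sz F(1) by force
        ultimately show "t \<in> {s'}" using lc by (metis singletonI)
      qed
      define d where "d = (\<Sum>t\<in>P. c t)"
      have d: "d \<in> G s'" unfolding d_def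
        by (rule gsum[OF g Pc(1)]) (use Psub Pc(2) in auto)
      have xdx: "x * d * x = x" using Pc(4) unfolding d_def
        by (simp add: sum_distrib_left sum_distrib_right)
      have "x * d \<in> prod_subgroup (G s) (G s')" using prod_subgroup.gen[OF x d] .
      moreover have "d * x \<in> prod_subgroup (G s') (G s)" using prod_subgroup.gen[OF d x] .
      moreover have "x * d * x = x" "x * (d * x) = x" using xdx by (simp_all add: mult.assoc)
      ultimately show ?thesis by blast
    qed
  qed
qed

end
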